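(* There is an absolute constant $c$ such that for every BST $T$ and every set $F$ of $k$ nodes of $T$ containing the root of $T$, the extended hand $E(T,F)$ consists of at most $c\,k$ intervals.
   Context: Let $T$ be a BST and $F$ a set of $k$ nodes (fingers) including the root. $S(T,F)$ is the Steiner tree of $F$ in $T$ (the minimal connected subtree containing $F$). The set of pseudofingers $P(T,F)$ consists of $F$ together with all nodes of degree $3$ in $S(T,F)$. For pseudofingers $x,y$ with $x$ an ancestor of $y$ such that the path between them contains no other pseudofinger, the tendon $\tau_{x,y}$ is the set of nodes strictly between $x$ and $y$ on this path. Its half tendons are $\tau^{<}_{x,y}=\{z\in\tau_{x,y}: z<y\}$ and $\tau^{>}_{x,y}=\{z\in\tau_{x,y}:z>y\}$; $H(T,F)$ is the set of all (nonempty) half tendons. A half tendon $\tau$ is identified with the interval $[\min\tau,\max\tau]$ and a pseudofinger $f$ with $[f,f]$. The extended hand is $E(T,F)=P(T,F)\cup H(T,F)$, viewed as a set of intervals. *)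

theory Defs
  imports Main "HOL-Library.Tree"
begin

text \<open>A BST is a tree T :: nat tree with bst T (strictly increasing inorder, so keys are
distinct); nodes are identified with their keys.\<close>

definition nodes :: "nat tree \<Rightarrow> nat set" where
  "nodes T = set_tree T"

definition anc :: "nat tree \<Rightarrow> nat \<Rightarrow> nat \<Rightarrow> bool" where
  "anc T a d \<longleftrightarrow> (\<exists>l r. Node l a r \<in> subtrees T \<and> d \<in> set_tree (Node l a r))"

definition proper_anc :: "nat tree \<Rightarrow> nat \<Rightarrow> nat \<Rightarrow> bool" where
  "proper_anc T a d \<longleftrightarrow> anc T a d \<and> a \<noteq> d"

definition parent :: "nat tree \<Rightarrow> nat \<Rightarrow> nat \<Rightarrow> bool" where
  "parent T p c \<longleftrightarrow> (\<exists>l r. Node l p r \<in> subtrees T \<and>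
      ((\<exists>ll rr. l = Node ll c rr) \<or> (\<exists>ll rr. r = Node ll c rr)))"

definition is_root :: "nat tree \<Rightarrow> nat \<Rightarrow> bool" where
  "is_root T x \<longleftrightarrow> (\<exists>l r. T = Node l x r)"

text \<open>w lies on the (unique) tree path between u and v: w is an ancestor-or-self of u or of v,
and every common ancestor of u and v is an ancestor-or-self of w (i.e. w is below the LCA).\<close>
definition on_path :: "nat tree \<Rightarrow> nat \<Rightarrow> nat \<Rightarrow> nat \<Rightarrow> bool" where
  "on_path T u v w \<longleftrightarrow> (anc T w u \<or> anc T w v) \<and>
      (\<forall>a. anc T a u \<and> anc T a v \<longrightarrow> anc T a w)"

text \<open>Steiner tree S(T,F): union of all tree paths between nodes of F (the minimal connected
subtree containing F).\<close>
definition steiner :: "nat tree \<Rightarrow> nat set \<Rightarrow> nat set" where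
  "steiner T F = {w. \<exists>u\<in>F. \<exists>v\<in>F. on_path T u v w}"

definition deg_in :: "nat tree \<Rightarrow> nat set \<Rightarrow> nat \<Rightarrow> nat" where
  "deg_in T S w = card {z \<in> S. parent T w z \<or> parent T z w}"

definition pseudofingers :: "nat tree \<Rightarrow> nat set \<Rightarrow> nat set" where
  "pseudofingers T F = F \<union> {w \<in> steiner T F. deg_in T (steiner T F) w = 3}"

definition between :: "nat tree \<Rightarrow> nat \<Rightarrow> nat \<Rightarrow> nat set" where
  "between T x y = {z. proper_anc T x z \<and> proper_anc T z y}"

definition tendon_pair :: "nat tree \<Rightarrow> nat set \<Rightarrow> nat \<Rightarrow> nat \<Rightarrow> bool" where
  "tendon_pair T F x y \<longleftrightarrow> x \<in> pseudofingers T F \<and> y \<in> pseudofingers T F \<and>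
      proper_anc T x y \<and> between T x y \<inter> pseudofingers T F = {}"

definition half_tendons :: "nat tree \<Rightarrow> nat set \<Rightarrow> nat set set" where
  "half_tendons T F =
     {h. h \<noteq> {} \<and> (\<exists>x y. tendon_pair T F x y \<and>
          (h = {z \<in> between T x y. z < y} \<or> h = {z \<in> between T x y. z > y}))}"

text \<open>Extended hand as a set of intervals [a,b], represented by pairs (a,b).\<close>
definition extended_hand :: "nat tree \<Rightarrow> nat set \<Rightarrow> (nat \<times> nat) set" where
  "extended_hand T F = (\<lambda>f. (f, f)) ` pseudofingers T F \<union>
                        (\<lambda>h. (Min h, Max h)) ` half_tendons T F"

end

theory Submission
  imports Defs
begin


lemma sub_trans: "s \<in> subtrees t \<Longrightarrow> t \<in> subtrees u \<Longrightarrow> s \<in> subtrees u"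
  by (induction u) auto

lemma sub_set: "s \<in> subtrees t \<Longrightarrow> set_tree s \<subseteq> set_tree t"
  by (induction t) auto

lemma sub_bst: "bst t \<Longrightarrow> s \<in> subtrees t \<Longrightarrow> bst s"
  by (induction t) auto

lemma uniq: "bst t \<Longrightarrow> Node l1 a r1 \<in> subtrees t \<Longrightarrow> Node l2 a r2 \<in> subtrees t \<Longrightarrow> l1 = l2 \<and> r1 = r2"
proof (induction t)
  case Leaf thus ?case by simp
next
  case (Node l v r)
  have bl: "bst l" "bst r" and lt: "\<forall>x\<in>set_tree l. x < v" and gt: "\<forall>x\<in>set_tree r. v < x"
    using Node.prems(1) by auto
  have A: "\<And>l' r'. Node l' a r' \<in> subtrees l \<Longrightarrow> a \<in> set_tree l"
    by (rule in_set_tree_if)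
  have B: "\<And>l' r'. Node l' a r' \<in> subtrees r \<Longrightarrow> a \<in> set_tree r"
    by (rule in_set_tree_if)
  have nl: "v \<notin> set_tree l" "v \<notin> set_tree r" using lt gt by auto
  have c1: "Node l1 a r1 = Node l v r \<or> Node l1 a r1 \<in> subtrees l \<or> Node l1 a r1 \<in> subtrees r"
    using Node.prems(2) by simp
  have c2: "Node l2 a r2 = Node l v r \<or> Node l2 a r2 \<in> subtrees l \<or> Node l2 a r2 \<in> subtrees r"
    using Node.prems(3) by simp
  have d: "a \<in> set_tree l \<Longrightarrow> a \<in> set_tree r \<Longrightarrow> False" using lt gt by fastforce
  from c1 show ?case
  proof (elim disjE)
    assume e1: "Node l1 a r1 = Node l v r"
    then have "a = v" by simp
    from c2 show ?thesis
    proof (elim disjE)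
      assume "Node l2 a r2 \<in> subtrees l" then show ?thesis using A nl \<open>a = v\<close> by blast
    next
      assume "Node l2 a r2 \<in> subtrees r" then show ?thesis using B nl \<open>a = v\<close> by blast
    qed (use e1 in simp)
  next
    assume e1: "Node l1 a r1 \<in> subtrees l"
    from c2 show ?thesis
    proof (elim disjE)
      assume "Node l2 a r2 = Node l v r" then show ?thesis using A[OF e1] nl by simp
    next
      assume "Node l2 a r2 \<in> subtrees l" then show ?thesis using Node.IH(1)[OF bl(1) e1] by blast
    next
      assume "Node l2 a r2 \<in> subtrees r" then show ?thesis using B A[OF e1] d by blast
    qed
  next
    assume e1: "Node l1 a r1 \<in> subtrees r"
    from c2 show ?thesis
    proof (elim disjE)
      assume "Node l2 a r2 = Node l v r" then show ?thesis using B[OF e1] nl by simp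
    next
      assume "Node l2 a r2 \<in> subtrees r" then show ?thesis using Node.IH(2)[OF bl(2) e1] by blast
    next
      assume "Node l2 a r2 \<in> subtrees l" then show ?thesis using A B[OF e1] d by blast
    qed
  qed
qed

lemma overlap: "bst t \<Longrightarrow> s1 \<in> subtrees t \<Longrightarrow> s2 \<in> subtrees t \<Longrightarrow> set_tree s1 \<inter> set_tree s2 \<noteq> {}
  \<Longrightarrow> s1 \<in> subtrees s2 \<or> s2 \<in> subtrees s1"
proof (induction t)
  case Leaf thus ?case by simp
next
  case (Node l v r)
  have bl: "bst l" "bst r" and lt: "\<forall>x\<in>set_tree l. x < v" and gt: "\<forall>x\<in>set_tree r. v < x"
    using Node.prems(1) by auto
  have d: "set_tree l \<inter> set_tree r = {}" using lt gt by fastforce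
  have s1: "s1 = Node l v r \<or> s1 \<in> subtrees l \<or> s1 \<in> subtrees r" using Node.prems(2) by auto
  have s2: "s2 = Node l v r \<or> s2 \<in> subtrees l \<or> s2 \<in> subtrees r" using Node.prems(3) by auto
  show ?case
  proof (cases "s1 = Node l v r")
    case True thus ?thesis using Node.prems(3) by simp
  next
    case f1: False
    show ?thesis
    proof (cases "s2 = Node l v r")
      case True thus ?thesis using Node.prems(2) by simp
    next
      case False
      then show ?thesis using f1 s1 s2 Node.IH(1)[OF bl(1)] Node.IH(2)[OF bl(2)] Node.prems(4)
         sub_set[of s1] sub_set[of s2] d by blast
    qed
  qed
qed

lemma anc_lin: "bst T \<Longrightarrow> anc T a d \<Longrightarrow> anc T b d \<Longrightarrow> anc T a b \<or> anc T b a"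
  unfolding anc_def
proof -
  assume b: "bst T" and "\<exists>l r. Node l a r \<in> subtrees T \<and> d \<in> set_tree (Node l a r)"
    and "\<exists>l r. Node l b r \<in> subtrees T \<and> d \<in> set_tree (Node l b r)"
  then obtain l1 r1 l2 r2 where 1: "Node l1 a r1 \<in> subtrees T" "d \<in> set_tree (Node l1 a r1)"
    and 2: "Node l2 b r2 \<in> subtrees T" "d \<in> set_tree (Node l2 b r2)" by blast
  have "Node l1 a r1 \<in> subtrees (Node l2 b r2) \<or> Node l2 b r2 \<in> subtrees (Node l1 a r1)"
    using overlap[OF b 1(1) 2(1)] 1(2) 2(2) by blast
  then show "(\<exists>l r. Node l a r \<in> subtrees T \<and> b \<in> set_tree (Node l a r)) \<or>
    (\<exists>l r. Node l b r \<in> subtrees T \<and> a \<in> set_tree (Node l b r))"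
    using 1 2 in_set_tree_if sub_trans by metis
qed


lemma par_aux:
  assumes "bst (Node l2 z2 r2)" "W \<in> {l2, r2}" "Node l1 z1 r1 \<in> subtrees l2 \<or> Node l1 z1 r1 \<in> subtrees r2"
    "W \<in> {l1, r1}" "W \<noteq> Leaf"
  shows False
proof -
  have sz: "size W < size (Node l1 z1 r1)" using assms(4) by auto
  have sW: "set_tree W \<subseteq> set_tree (Node l1 z1 r1)" using assms(4) by auto
  obtain a w b where Wd: "W = Node a w b" using assms(5) by (cases W) auto
  have dis: "set_tree l2 \<inter> set_tree r2 = {}" using assms(1) by fastforce
  from assms(3) show False
  proof
    assume h: "Node l1 z1 r1 \<in> subtrees l2"
    have 1: "size (Node l1 z1 r1) \<le> size l2" using size_subtrees[OF h] .
    have 2: "set_tree (Node l1 z1 r1) \<subseteq> set_tree l2" using sub_set[OF h] .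
    have "W = l2 \<or> W = r2" using assms(2) by blast
    then show False
    proof
      assume "W = l2" then show False using 1 sz by simp
    next
      assume e: "W = r2"
      have "w \<in> set_tree W" using Wd by simp
      then have "w \<in> set_tree l2" "w \<in> set_tree r2" using e 2 sW by blast+
      then show False using dis by blast
    qed
  next
    assume h: "Node l1 z1 r1 \<in> subtrees r2"
    have 1: "size (Node l1 z1 r1) \<le> size r2" using size_subtrees[OF h] .
    have 2: "set_tree (Node l1 z1 r1) \<subseteq> set_tree r2" using sub_set[OF h] .
    have "W = r2 \<or> W = l2" using assms(2) by blast
    then show False
    proof
      assume "W = r2" then show False using 1 sz by simp
    next
      assume e: "W = l2"
      have "w \<in> set_tree W" using Wd by simp
      then have "w \<in> set_tree r2" "w \<in> set_tree l2" using e 2 sW by blast+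
      then show False using dis by blast
    qed
  qed
qed

lemma par_uniq: assumes b: "bst T" and p1: "parent T z1 w" and p2: "parent T z2 w" shows "z1 = z2"
proof -
  obtain l1 r1 a1 b1 where S1: "Node l1 z1 r1 \<in> subtrees T" and W1: "Node a1 w b1 \<in> {l1, r1}"
    using p1 unfolding parent_def by blast
  obtain l2 r2 a2 b2 where S2: "Node l2 z2 r2 \<in> subtrees T" and W2: "Node a2 w b2 \<in> {l2, r2}"
    using p2 unfolding parent_def by blast
  have "Node a1 w b1 \<in> subtrees (Node l1 z1 r1)" using W1 by auto
  then have W1T: "Node a1 w b1 \<in> subtrees T" using sub_trans S1 by blast
  have "Node a2 w b2 \<in> subtrees (Node l2 z2 r2)" using W2 by auto
  then have W2T: "Node a2 w b2 \<in> subtrees T" using sub_trans S2 by blast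
  have eq: "a1 = a2 \<and> b1 = b2" using uniq[OF b W1T W2T] .
  have "w \<in> set_tree (Node l1 z1 r1) \<inter> set_tree (Node l2 z2 r2)" using W1 W2 by auto
  then have ov: "Node l1 z1 r1 \<in> subtrees (Node l2 z2 r2) \<or> Node l2 z2 r2 \<in> subtrees (Node l1 z1 r1)"
    using overlap[OF b S1 S2] by blast
  have bs1: "bst (Node l1 z1 r1)" and bs2: "bst (Node l2 z2 r2)" using sub_bst b S1 S2 by blast+
  show ?thesis
  proof (rule ccontr)
    assume ne: "z1 \<noteq> z2"
    from ov show False
    proof
      assume "Node l1 z1 r1 \<in> subtrees (Node l2 z2 r2)"
      then have "Node l1 z1 r1 \<in> subtrees l2 \<or> Node l1 z1 r1 \<in> subtrees r2" using ne by auto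
      then show False using par_aux[OF bs2 W2 _ _] W1 eq by blast
    next
      assume "Node l2 z2 r2 \<in> subtrees (Node l1 z1 r1)"
      then have "Node l2 z2 r2 \<in> subtrees l1 \<or> Node l2 z2 r2 \<in> subtrees r1" using ne by auto
      then show False using par_aux[OF bs1 W1 _ _] W2 eq by blast
    qed
  qed
qed



definition br :: "nat tree \<Rightarrow> nat set \<Rightarrow> nat set" where
  "br T F = {w. \<exists>l r. Node l w r \<in> subtrees T \<and> set_tree l \<inter> F \<noteq> {} \<and> set_tree r \<inter> F \<noteq> {}}"

lemma br_Leaf: "br Leaf F = {}" by (simp add: br_def)

lemma br_gen: "{w. \<exists>la ra. Node la w ra \<in> {Node l v r} \<union> A \<union> B \<and> P la \<and> P ra} =
  (if P l \<and> P r then {v} else {}) \<union> {w. \<exists>la ra. Node la w ra \<in> A \<and> P la \<and> P ra}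
   \<union> {w. \<exists>la ra. Node la w ra \<in> B \<and> P la \<and> P ra}"
  by auto

lemma br_Node: "br (Node l v r) F = br l F \<union> br r F \<union>
   (if set_tree l \<inter> F \<noteq> {} \<and> set_tree r \<inter> F \<noteq> {} then {v} else {})"
proof -
  have "br (Node l v r) F = (if set_tree l \<inter> F \<noteq> {} \<and> set_tree r \<inter> F \<noteq> {} then {v} else {}) \<union> br l F \<union> br r F"
    unfolding br_def subtrees.simps by (rule br_gen[where P="\<lambda>t. set_tree t \<inter> F \<noteq> {}"])
  then show ?thesis by auto
qed

lemma br_sub: "br T F \<subseteq> set_tree T"
  unfolding br_def by (auto intro: in_set_tree_if)

lemma br_empty: "set_tree T \<inter> F = {} \<Longrightarrow> br T F = {}"
  unfolding br_def using sub_set by fastforce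

lemma br_card: "bst T \<Longrightarrow> set_tree T \<inter> F \<noteq> {} \<Longrightarrow> card (br T F) < card (set_tree T \<inter> F)"
proof (induction T)
  case Leaf thus ?case by simp
next
  case (Node l v r)
  have bl: "bst l" "bst r" and lt: "\<forall>x\<in>set_tree l. x < v" and gt: "\<forall>x\<in>set_tree r. v < x"
    using Node.prems(1) by auto
  have fin: "finite (br l F)" "finite (br r F)" by (rule finite_subset[OF br_sub], simp)+
  define ml where "ml = card (set_tree l \<inter> F)"
  define mr where "mr = card (set_tree r \<inter> F)"
  have dis: "(set_tree l \<inter> F) \<inter> (set_tree r \<inter> F) = {}" using lt gt by fastforce
  have sub: "(set_tree l \<inter> F) \<union> (set_tree r \<inter> F) \<subseteq> set_tree (Node l v r) \<inter> F" by auto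
  have "card ((set_tree l \<inter> F) \<union> (set_tree r \<inter> F)) = ml + mr"
    unfolding ml_def mr_def by (rule card_Un_disjoint[OF _ _ dis]) auto
  moreover have "card ((set_tree l \<inter> F) \<union> (set_tree r \<inter> F)) \<le> card (set_tree (Node l v r) \<inter> F)"
    by (rule card_mono[OF _ sub]) simp
  ultimately have m: "ml + mr \<le> card (set_tree (Node l v r) \<inter> F)" by simp
  have u1: "card (br l F \<union> br r F) \<le> card (br l F) + card (br r F)" by (rule card_Un_le)
  show ?case
  proof (cases "set_tree l \<inter> F = {}")
    case el: True
    show ?thesis
    proof (cases "set_tree r \<inter> F = {}")
      case True
      then have "br (Node l v r) F = {}" using el br_empty by (simp add: br_Node)
      then show ?thesis using Node.prems(2) card_gt_0_iff by fastforce
    next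
      case False
      then have "card (br r F) < mr" using Node.IH(2)[OF bl(2)] mr_def by blast
      moreover have "br (Node l v r) F = br r F" using el br_empty[OF el] by (simp add: br_Node)
      ultimately show ?thesis using m by simp
    qed
  next
    case nl: False
    have il: "card (br l F) < ml" using Node.IH(1)[OF bl(1) nl] ml_def by blast
    show ?thesis
    proof (cases "set_tree r \<inter> F = {}")
      case True
      moreover have "br (Node l v r) F = br l F" using True br_empty[OF True] by (simp add: br_Node)
      ultimately show ?thesis using m il by simp
    next
      case False
      then have ir: "card (br r F) < mr" using Node.IH(2)[OF bl(2)] mr_def by blast
      have "br (Node l v r) F = insert v (br l F \<union> br r F)" using nl False by (simp add: br_Node)
      then have "card (br (Node l v r) F) \<le> Suc (card (br l F \<union> br r F))"
        by (simp add: card_insert_le_m1 card_insert_if fin)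
      then show ?thesis using u1 il ir m by linarith
    qed
  qed
qed



lemma self_sub: "t \<in> subtrees t" by (cases t) auto

lemma steiner_anc: "w \<in> steiner T F \<Longrightarrow> \<exists>u\<in>F. anc T w u"
  unfolding steiner_def on_path_def by blast

lemma anc_node: "anc T w u \<Longrightarrow> \<exists>l r. Node l w r \<in> subtrees T \<and> u \<in> set_tree (Node l w r)"
  unfolding anc_def by blast

lemma deg_small:
  assumes b: "bst T" and S: "Node l w r \<in> subtrees T" and e: "set_tree s \<inter> F = {}"
    and st: "(s = l \<and> t = r) \<or> (s = r \<and> t = l)"
  shows "deg_in T (steiner T F) w \<le> 2"
proof -
  define N where "N = {z \<in> steiner T F. parent T w z \<or> parent T z w}"
  have "s \<in> subtrees (Node l w r)" using st self_sub by auto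
  then have sT: "s \<in> subtrees T" using S sub_trans by blast
  have N1: "N \<subseteq> {z. parent T z w} \<union> {z. \<exists>a b. t = Node a z b}"
  proof
    fix z assume z: "z \<in> N"
    show "z \<in> {z. parent T z w} \<union> {z. \<exists>a b. t = Node a z b}"
    proof (cases "parent T z w")
      case True thus ?thesis by simp
    next
      case False
      then have pz: "parent T w z" and zs: "z \<in> steiner T F" using z N_def by auto
      obtain l' r' where S': "Node l' w r' \<in> subtrees T"
        and ch: "(\<exists>ll rr. l' = Node ll z rr) \<or> (\<exists>ll rr. r' = Node ll z rr)"
        using pz unfolding parent_def by blast
      have eq: "l' = l \<and> r' = r" using uniq[OF b S' S] .
      have "\<not> (\<exists>a b. s = Node a z b)"
      proof
        assume "\<exists>a b. s = Node a z b"
        then obtain a b where sd: "s = Node a z b" by blast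
        obtain u where u: "u \<in> F" "anc T z u" using steiner_anc[OF zs] by blast
        obtain l2 r2 where n2: "Node l2 z r2 \<in> subtrees T" "u \<in> set_tree (Node l2 z r2)"
          using anc_node[OF u(2)] by blast
        have "l2 = a \<and> r2 = b" using uniq[OF b n2(1)] sT sd by blast
        then have "u \<in> set_tree s" using n2(2) sd by simp
        then show False using e u(1) by blast
      qed
      then have "\<exists>a b. t = Node a z b" using ch eq st by blast
      then show ?thesis by simp
    qed
  qed
  obtain p where p: "{z. parent T z w} \<subseteq> {p}"
  proof (cases "\<exists>z. parent T z w")
    case True
    then obtain z where "parent T z w" by blast
    then have "{z. parent T z w} \<subseteq> {z}" using par_uniq[OF b] by blast
    then show ?thesis using that by blast
  next
    case False then show ?thesis using that by blast
  qed
  obtain q where q: "{z. \<exists>a b. t = Node a z b} \<subseteq> {q}"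
  proof (cases t)
    case Leaf then show ?thesis using that by blast
  next
    case (Node a q b) then show ?thesis using that[of q] by blast
  qed
  have "N \<subseteq> {p, q}" using N1 p q by blast
  then have "card N \<le> card {p, q}" by (rule card_mono[rotated]) simp
  also have "card {p, q} \<le> 2" by (cases "p = q") auto
  finally show ?thesis unfolding deg_in_def N_def .
qed

lemma deg3_br:
  assumes b: "bst T" and w: "w \<in> steiner T F" and d: "deg_in T (steiner T F) w = 3"
  shows "w \<in> br T F"
proof -
  obtain u where "u \<in> F" "anc T w u" using steiner_anc[OF w] by blast
  then obtain l r where S: "Node l w r \<in> subtrees T" using anc_node by blast
  have "set_tree l \<inter> F \<noteq> {}" using deg_small[OF b S, of l F r] d by auto
  moreover have "set_tree r \<inter> F \<noteq> {}" using deg_small[OF b S, of r F l] d by auto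
  ultimately show ?thesis unfolding br_def using S by blast
qed

lemma tendon_uniq:
  assumes b: "bst T" and t1: "tendon_pair T F x y" and t2: "tendon_pair T F x' y"
  shows "x = x'"
proof (rule ccontr)
  assume ne: "x \<noteq> x'"
  have a1: "anc T x y" "x \<noteq> y" and a2: "anc T x' y" "x' \<noteq> y"
    using t1 t2 unfolding tendon_pair_def proper_anc_def by auto
  from anc_lin[OF b a1(1) a2(1)] show False
  proof
    assume "anc T x x'"
    then have "x' \<in> between T x y" using ne a2 unfolding between_def proper_anc_def by blast
    then show False using t1 t2 unfolding tendon_pair_def by blast
  next
    assume "anc T x' x"
    then have "x \<in> between T x' y" using ne a1 unfolding between_def proper_anc_def by blast
    then show False using t1 t2 unfolding tendon_pair_def by blast
  qed
qed

lemma steiner_sub: "steiner T F \<subseteq> set_tree T"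
proof
  fix w assume "w \<in> steiner T F"
  then obtain u where "anc T w u" using steiner_anc by blast
  then obtain l r where "Node l w r \<in> subtrees T" using anc_node by blast
  then show "w \<in> set_tree T" by (rule in_set_tree_if)
qed


theorem lemma14:
  "\<exists>c::nat. \<forall>(T::nat tree) F k x.
     bst T \<and> F \<subseteq> nodes T \<and> card F = k \<and> is_root T x \<and> x \<in> F \<longrightarrow>
     card (extended_hand T F) \<le> c * k"
proof (intro exI[of _ 6] allI impI)
  fix T F k x
  assume h: "bst T \<and> F \<subseteq> nodes T \<and> card F = k \<and> is_root T x \<and> x \<in> F"
  have b: "bst T" and Fs: "F \<subseteq> set_tree T" and k: "card F = k" using h nodes_def by auto
  have finF: "finite F" by (rule finite_subset[OF Fs]) simp
  define P where "P = pseudofingers T F"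
  have Psub: "P \<subseteq> F \<union> br T F"
    unfolding P_def pseudofingers_def by (auto intro: deg3_br[OF b])
  have finB: "finite (br T F)" by (rule finite_subset[OF br_sub]) simp
  have finFB: "finite (F \<union> br T F)" using finF finB by simp
  have finP: "finite P" by (rule finite_subset[OF Psub finFB])
  have c1: "card P \<le> card (F \<union> br T F)" by (rule card_mono[OF finFB Psub])
  have c2: "card (F \<union> br T F) \<le> card F + card (br T F)" by (rule card_Un_le)
  have c3: "card (br T F) \<le> card F"
  proof (cases "set_tree T \<inter> F = {}")
    case True then show ?thesis using br_empty by simp
  next
    case False
    have "card (br T F) < card (set_tree T \<inter> F)" using br_card[OF b False] .
    moreover have "set_tree T \<inter> F = F" using Fs by blast
    ultimately show ?thesis by simp
  qed
  have cP: "card P \<le> 2 * k" using c1 c2 c3 k by linarith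
  define g where "g y = (SOME x. tendon_pair T F x y)" for y
  define f1 where "f1 y = {z \<in> between T (g y) y. z < y}" for y
  define f2 where "f2 y = {z \<in> between T (g y) y. z > y}" for y
  have Hsub: "half_tendons T F \<subseteq> f1 ` P \<union> f2 ` P"
  proof
    fix h assume "h \<in> half_tendons T F"
    then obtain x y where tp: "tendon_pair T F x y"
      and hh: "h = {z \<in> between T x y. z < y} \<or> h = {z \<in> between T x y. z > y}"
      unfolding half_tendons_def by blast
    have yP: "y \<in> P" using tp unfolding tendon_pair_def P_def by blast
    have "tendon_pair T F (g y) y" unfolding g_def using tp by (rule someI)
    then have "g y = x" using tendon_uniq[OF b _ tp] by blast
    then show "h \<in> f1 ` P \<union> f2 ` P" using hh yP unfolding f1_def f2_def by blast
  qed
  have finH: "finite (half_tendons T F)" by (rule finite_subset[OF Hsub]) (simp add: finP)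
  have cH: "card (half_tendons T F) \<le> card P + card P"
  proof -
    have "card (half_tendons T F) \<le> card (f1 ` P \<union> f2 ` P)" by (rule card_mono[OF _ Hsub]) (simp add: finP)
    also have "\<dots> \<le> card (f1 ` P) + card (f2 ` P)" by (rule card_Un_le)
    also have "\<dots> \<le> card P + card P" using card_image_le[OF finP, of f1] card_image_le[OF finP, of f2] by linarith
    finally show ?thesis .
  qed
  have "card (extended_hand T F) \<le> card ((\<lambda>f. (f, f)) ` P) + card ((\<lambda>h. (Min h, Max h)) ` half_tendons T F)"
    unfolding extended_hand_def P_def[symmetric] by (rule card_Un_le)
  also have "\<dots> \<le> card P + card (half_tendons T F)"
    using card_image_le[OF finP, of "\<lambda>f. (f, f)"] card_image_le[OF finH, of "\<lambda>h. (Min h, Max h)"] by linarith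
  finally show "card (extended_hand T F) \<le> 6 * k" using cP cH by linarith
qed

end
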